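(* Let $G$ be a graph and let $\mathcal R=\{G_v: v\in V(G)\}$ be a family of pairwise vertex-disjoint graphs. Then $$\gamma_{gr}(G\hookleftarrow \mathcal R)=\max \left\{\gamma_{gr}(G,I)+\sum_{v\in I} \gamma_{gr}(G_v)-|I| \;:\; I \text{ is an independent set of } G\right\}.$$
   Context: All graphs are finite and simple; $N[v]$ denotes the closed neighborhood. The $X$-join product $G\hookleftarrow \mathcal R$ has vertex set $\bigcup_{v\in V(G)}V(G_v)$, the edges of all $G_v$, and all edges between $V(G_u)$ and $V(G_v)$ whenever $uv\in E(G)$. For a sequence $S=(v_1,\dots,v_k)$ of distinct vertices, $\widehat S=\{v_1,\dots,v_k\}$, $|S|=k$, and $PN_S(v_i)=N[v_i]\setminus\bigcup_{j<i}N[v_j]$. $S$ is a legal dominating sequence of $G$ if $\widehat S$ is a dominating set and $PN_S(v_i)\neq\emptyset$ for all $i$; $\mathcal L(G)$ is the set of these. $\gamma_{gr}(G)$ (Grundy domination number) is the maximum length of a legal dominating sequence. For $S\in\mathcal L(G)$, the footprinter $f_S(x)$ of $x$ is the unique $v\in\widehat S$ with $x\in PN_S(v)$, and $I_S=\{v: f_S(v)=v\}$. For an independent set $I$, $\mathcal L(G,I)=\{S\in\mathcal L(G): I_S=I\}$ and $\gamma_{gr}(G,I)=\max\{|S|:S\in\mathcal L(G,I)\}$, where the maximum of the empty set is $-\infty$. *)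

theory Defs
  imports Main "HOL-Library.Extended_Real"
begin

type_synonym 'a graph = "'a set \<times> ('a \<times> 'a) set"

definition verts :: "'a graph \<Rightarrow> 'a set" where "verts G = fst G"
definition edges :: "'a graph \<Rightarrow> ('a \<times> 'a) set" where "edges G = snd G"

definition graph :: "'a graph \<Rightarrow> bool" where
  "graph G \<longleftrightarrow> finite (verts G) \<and> edges G \<subseteq> verts G \<times> verts G
     \<and> sym (edges G) \<and> irrefl (edges G)"

definition cnbh :: "'a graph \<Rightarrow> 'a \<Rightarrow> 'a set" where
  "cnbh G v = insert v {u. (v, u) \<in> edges G}"

definition independent :: "'a graph \<Rightarrow> 'a set \<Rightarrow> bool" where
  "independent G I \<longleftrightarrow> I \<subseteq> verts G \<and> (\<forall>u\<in>I. \<forall>v\<in>I. (u, v) \<notin> edges G)"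

definition dominating :: "'a graph \<Rightarrow> 'a set \<Rightarrow> bool" where
  "dominating G D \<longleftrightarrow> D \<subseteq> verts G \<and> (\<forall>x\<in>verts G. \<exists>v\<in>D. x \<in> cnbh G v)"

definition PN :: "'a graph \<Rightarrow> 'a list \<Rightarrow> nat \<Rightarrow> 'a set" where
  "PN G S i = cnbh G (S ! i) - (\<Union>j<i. cnbh G (S ! j))"

definition legal_dom_seqs :: "'a graph \<Rightarrow> 'a list set" where
  "legal_dom_seqs G = {S. distinct S \<and> dominating G (set S)
      \<and> (\<forall>i<length S. PN G S i \<noteq> {})}"

definition gamma_gr :: "'a graph \<Rightarrow> nat" where
  "gamma_gr G = Max (length ` legal_dom_seqs G)"

definition footprinter :: "'a graph \<Rightarrow> 'a list \<Rightarrow> 'a \<Rightarrow> 'a" where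
  "footprinter G S x = (THE v. \<exists>i<length S. S ! i = v \<and> x \<in> PN G S i)"

definition I_seq :: "'a graph \<Rightarrow> 'a list \<Rightarrow> 'a set" where
  "I_seq G S = {v \<in> verts G. footprinter G S v = v}"

definition legal_dom_seqs_I :: "'a graph \<Rightarrow> 'a set \<Rightarrow> 'a list set" where
  "legal_dom_seqs_I G I = {S \<in> legal_dom_seqs G. I_seq G S = I}"

definition gamma_gr_I :: "'a graph \<Rightarrow> 'a set \<Rightarrow> ereal" where
  "gamma_gr_I G I = (if legal_dom_seqs_I G I = {} then -\<infinity>
      else ereal (real (Max (length ` legal_dom_seqs_I G I))))"

definition xjoin :: "'a graph \<Rightarrow> ('a \<Rightarrow> 'b graph) \<Rightarrow> 'b graph" where
  "xjoin G R = ((\<Union>v\<in>verts G. verts (R v)),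
     (\<Union>v\<in>verts G. edges (R v)) \<union>
     {(x, y). \<exists>u v. (u, v) \<in> edges G \<and> x \<in> verts (R u) \<and> y \<in> verts (R v)})"

end

theory Submission
  imports Defs
begin


definition dom_by :: "'a graph \<Rightarrow> 'a list \<Rightarrow> 'a set" where
  "dom_by G xs = (\<Union>x\<in>set xs. cnbh G x)"

definition leg :: "'a graph \<Rightarrow> 'a list \<Rightarrow> bool" where
  "leg G xs \<longleftrightarrow> (\<forall>i<length xs. cnbh G (xs!i) - dom_by G (take i xs) \<noteq> {})"

lemma in_set_take_iff: "x \<in> set (take i S) \<longleftrightarrow> (\<exists>j<i. j < length S \<and> S!j = x)"
  by (auto simp: in_set_conv_nth)

lemma nth_in_take: "j < i \<Longrightarrow> j < length S \<Longrightarrow> S!j \<in> set (take i S)"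
  unfolding in_set_take_iff by blast

lemma PN_eq: "i \<le> length S \<Longrightarrow> PN G S i = cnbh G (S!i) - dom_by G (take i S)"
proof -
  assume i: "i \<le> length S"
  have "(\<Union>j<i. cnbh G (S ! j)) = (\<Union>x\<in>set (take i S). cnbh G x)"
  proof (intro set_eqI iffI)
    fix x assume "x \<in> (\<Union>j<i. cnbh G (S ! j))"
    then obtain j where j: "j < i" "x \<in> cnbh G (S!j)" by auto
    have "S!j \<in> set (take i S)" using j i by (intro nth_in_take) auto
    thus "x \<in> (\<Union>x\<in>set (take i S). cnbh G x)" using j by blast
  next
    fix x assume "x \<in> (\<Union>x\<in>set (take i S). cnbh G x)"
    then obtain y where y: "y \<in> set (take i S)" "x \<in> cnbh G y" by auto
    then obtain j where "j < i" "S!j = y" by (auto simp: in_set_take_iff)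
    thus "x \<in> (\<Union>j<i. cnbh G (S ! j))" using y by blast
  qed
  thus ?thesis unfolding PN_def dom_by_def by simp
qed

lemma self_cnbh[simp]: "v \<in> cnbh G v" by (simp add: cnbh_def)

lemma dom_by_append[simp]: "dom_by G (xs @ ys) = dom_by G xs \<union> dom_by G ys"
  by (auto simp: dom_by_def)

lemma dom_by_simps[simp]: "dom_by G [] = {}" "dom_by G (x#xs) = cnbh G x \<union> dom_by G xs"
  by (auto simp: dom_by_def)

lemma leg_append: "leg G (xs @ ys) \<longleftrightarrow> leg G xs \<and>
   (\<forall>i<length ys. cnbh G (ys!i) - dom_by G xs - dom_by G (take i ys) \<noteq> {})"
proof -
  have A: "(\<forall>i<length (xs@ys). P i) \<longleftrightarrow> (\<forall>i<length xs. P i) \<and> (\<forall>i<length ys. P (length xs + i))" for P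
    by (auto, metis add_diff_inverse_nat nat_add_left_cancel_less)
  show ?thesis unfolding leg_def A
    by (simp add: nth_append Diff_eq Int_assoc Int_commute Int_left_commute)
qed

lemma leg_snoc: "leg G (xs @ [x]) \<longleftrightarrow> leg G xs \<and> cnbh G x - dom_by G xs \<noteq> {}"
  by (simp add: leg_append)

lemma leg_distinct: assumes "leg G xs" shows "distinct xs"
proof (subst distinct_conv_nth, intro allI impI)
  fix i j assume ij: "i < length xs" "j < length xs" "i \<noteq> j"
  show "xs!i \<noteq> xs!j"
  proof
    assume eq: "xs!i = xs!j"
    { fix a b assume ab: "a < length xs" "b < a" "xs!a = xs!b"
      have "xs!b \<in> set (take a xs)" using ab by (auto simp: in_set_take_iff)
      hence "cnbh G (xs!a) \<subseteq> dom_by G (take a xs)" using ab(3) by (auto simp: dom_by_def)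
      hence False using assms ab(1) unfolding leg_def by auto }
    thus False using ij eq by (metis linorder_neqE_nat)
  qed
qed

lemma legal_dom_seqs_eq: "legal_dom_seqs G = {S. leg G S \<and> dominating G (set S)}"
  unfolding legal_dom_seqs_def leg_def by (auto simp: PN_eq leg_distinct[unfolded leg_def])

lemma dominating_dom_by: "dominating G (set xs) \<longleftrightarrow> set xs \<subseteq> verts G \<and> verts G \<subseteq> dom_by G xs"
  by (auto simp: dominating_def dom_by_def)

lemma extend_leg:
  assumes fin: "finite (verts G)"
  shows "leg G xs \<Longrightarrow> set xs \<subseteq> verts G \<Longrightarrow> \<exists>ys. leg G (xs @ ys) \<and> dominating G (set (xs @ ys))"
proof (induction "card (verts G) - length xs" arbitrary: xs rule: less_induct)
  case less
  show ?case
  proof (cases "verts G \<subseteq> dom_by G xs")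
    case True thus ?thesis using less.prems by (intro exI[of _ "[]"]) (simp add: dominating_dom_by)
  next
    case False
    then obtain y where y: "y \<in> verts G" "y \<notin> dom_by G xs" by auto
    have l2: "leg G (xs @ [y])" using less.prems y by (simp add: leg_snoc) (metis self_cnbh subsetD)
    have s2: "set (xs @ [y]) \<subseteq> verts G" using less.prems y by auto
    have "length (xs @ [y]) \<le> card (verts G)"
      using leg_distinct[OF l2] s2 fin by (metis card_mono distinct_card)
    hence "card (verts G) - length (xs @ [y]) < card (verts G) - length xs" by simp
    from less.hyps[OF this l2 s2] obtain ys where "leg G (xs @ [y] @ ys) \<and> dominating G (set (xs @ [y] @ ys))" by auto
    thus ?thesis by blast
  qed
qed

lemma finite_lds: assumes "finite (verts G)" shows "finite (legal_dom_seqs G)"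
proof -
  have "legal_dom_seqs G \<subseteq> {xs. set xs \<subseteq> verts G \<and> length xs \<le> card (verts G)}"
    by (auto simp: legal_dom_seqs_def dominating_def intro: card_mono[OF assms] simp flip: distinct_card)
  thus ?thesis using finite_lists_length_le[OF assms] finite_subset by blast
qed

lemma nonempty_lds: assumes "finite (verts G)" shows "legal_dom_seqs G \<noteq> {}"
  using extend_leg[OF assms, of "[]"] by (auto simp: legal_dom_seqs_eq leg_def)

lemma gamma_ge: assumes "finite (verts G)" "leg G xs" "set xs \<subseteq> verts G"
  shows "length xs \<le> gamma_gr G"
proof -
  obtain ys where "leg G (xs @ ys) \<and> dominating G (set (xs @ ys))" using extend_leg assms by blast
  hence "xs @ ys \<in> legal_dom_seqs G" by (simp add: legal_dom_seqs_eq)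
  hence "length (xs @ ys) \<le> gamma_gr G" unfolding gamma_gr_def
    using finite_lds[OF assms(1)] by (intro Max_ge) (auto simp del: length_append)
  thus ?thesis by simp
qed

lemma gamma_attained: assumes "finite (verts G)"
  shows "\<exists>S\<in>legal_dom_seqs G. length S = gamma_gr G"
proof -
  have "gamma_gr G \<in> length ` legal_dom_seqs G" unfolding gamma_gr_def
    using finite_lds[OF assms] nonempty_lds[OF assms] by (intro Max_in) auto
  thus ?thesis by auto
qed

lemma fp_char: assumes "i < length S" "x \<in> cnbh G (S!i)" "\<forall>j<i. x \<notin> cnbh G (S!j)"
  shows "footprinter G S x = S!i"
  unfolding footprinter_def
proof (rule the_equality)
  show "\<exists>i'<length S. S ! i' = S!i \<and> x \<in> PN G S i'" using assms unfolding PN_def by auto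
next
  fix v assume "\<exists>i'<length S. S ! i' = v \<and> x \<in> PN G S i'"
  then obtain i' where i': "i' < length S" "S!i' = v" "x \<in> PN G S i'" by auto
  have "i' = i"
  proof (rule ccontr)
    assume "i' \<noteq> i"
    then consider "i' < i" | "i < i'" by linarith
    thus False using i' assms unfolding PN_def by cases auto
  qed
  thus "v = S!i" using i' by simp
qed

lemma fp_exists: assumes "\<exists>i<length S. x \<in> cnbh G (S!i)"
  shows "\<exists>i<length S. x \<in> cnbh G (S!i) \<and> (\<forall>j<i. x \<notin> cnbh G (S!j))"
proof -
  define i where "i = (LEAST i. i<length S \<and> x \<in> cnbh G (S!i))"
  have "i<length S \<and> x \<in> cnbh G (S!i)" unfolding i_def by (rule LeastI_ex) (use assms in auto)
  moreover have "\<forall>j<i. x \<notin> cnbh G (S!j)"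
    using not_less_Least[of _ "\<lambda>i. i<length S \<and> x \<in> cnbh G (S!i)"] calculation unfolding i_def
    by (meson order.strict_trans)
  ultimately show ?thesis by blast
qed

lemma leg_filter:
  assumes "\<forall>j<length T. P (T!j) \<longrightarrow> (\<exists>y\<in>cnbh G (T!j). \<forall>j'<j. P (T!j') \<longrightarrow> y \<notin> cnbh G (T!j'))"
  shows "leg G (filter P T)"
  using assms
proof (induction T rule: rev_induct)
  case Nil thus ?case by (simp add: leg_def)
next
  case (snoc x xs)
  have h1: "\<forall>j<length xs. P (xs!j) \<longrightarrow> (\<exists>y\<in>cnbh G (xs!j). \<forall>j'<j. P (xs!j') \<longrightarrow> y \<notin> cnbh G (xs!j'))"
  proof (intro allI impI)
    fix j assume j: "j < length xs" "P (xs!j)"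
    from snoc.prems[rule_format, of j] j show "\<exists>y\<in>cnbh G (xs!j). \<forall>j'<j. P (xs!j') \<longrightarrow> y \<notin> cnbh G (xs!j')"
      by (auto simp: nth_append)
  qed
  have IH: "leg G (filter P xs)" using snoc.IH[OF h1] .
  show ?case
  proof (cases "P x")
    case False thus ?thesis using IH by simp
  next
    case True
    from snoc.prems[rule_format, of "length xs"] True obtain y where
      y: "y \<in> cnbh G x" "\<forall>j'<length xs. P (xs!j') \<longrightarrow> y \<notin> cnbh G (xs!j')" by (auto simp: nth_append)
    have "y \<notin> dom_by G (filter P xs)" using y(2) by (auto simp: dom_by_def in_set_conv_nth)
    thus ?thesis using True IH y(1) by (auto simp: leg_snoc)
  qed
qed



locale xj =
  fixes G :: "'a graph" and R :: "'a \<Rightarrow> 'b graph"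
  assumes gG: "graph G"
    and gR: "\<forall>v\<in>verts G. graph (R v)"
    and neR: "\<forall>v\<in>verts G. verts (R v) \<noteq> {}"
    and dj: "\<forall>u\<in>verts G. \<forall>v\<in>verts G. u \<noteq> v \<longrightarrow> verts (R u) \<inter> verts (R v) = {}"
begin

abbreviation "H \<equiv> xjoin G R"

definition blk :: "'b \<Rightarrow> 'a" where "blk x = (THE v. v \<in> verts G \<and> x \<in> verts (R v))"

lemma vertsH: "verts H = (\<Union>v\<in>verts G. verts (R v))"
  by (simp add: xjoin_def verts_def)

lemma edgesH: "edges H = (\<Union>v\<in>verts G. edges (R v)) \<union>
     {(x, y). \<exists>u v. (u, v) \<in> edges G \<and> x \<in> verts (R u) \<and> y \<in> verts (R v)}"
  by (simp add: xjoin_def edges_def)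

lemma blk_eq: "v \<in> verts G \<Longrightarrow> x \<in> verts (R v) \<Longrightarrow> blk x = v"
  unfolding blk_def using dj by (intro the_equality) auto

lemma blk_in: "x \<in> verts H \<Longrightarrow> blk x \<in> verts G \<and> x \<in> verts (R (blk x))"
  using blk_eq by (auto simp: vertsH)

lemma finH: "finite (verts H)"
  using gG gR by (auto simp: vertsH graph_def)

lemma eG: "(u,w) \<in> edges G \<Longrightarrow> u \<in> verts G \<and> w \<in> verts G \<and> (w,u) \<in> edges G \<and> u \<noteq> w"
  using gG unfolding graph_def sym_def irrefl_def by auto

lemma eR: "v \<in> verts G \<Longrightarrow> (x,y) \<in> edges (R v) \<Longrightarrow> x \<in> verts (R v) \<and> y \<in> verts (R v)"
  using gR unfolding graph_def by auto

lemma edgesH_iff: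
  assumes "u \<in> verts G" "w \<in> verts G" "x \<in> verts (R u)" "y \<in> verts (R w)"
  shows "(x,y) \<in> edges H \<longleftrightarrow> (u = w \<and> (x,y) \<in> edges (R u)) \<or> (u,w) \<in> edges G"
proof
  assume "(x,y) \<in> edges H"
  then consider v where "v \<in> verts G" "(x,y) \<in> edges (R v)"
    | u' w' where "(u',w') \<in> edges G" "x \<in> verts (R u')" "y \<in> verts (R w')"
    unfolding edgesH by blast
  thus "(u = w \<and> (x,y) \<in> edges (R u)) \<or> (u,w) \<in> edges G"
  proof cases
    case 1
    with eR have "x \<in> verts (R v)" "y \<in> verts (R v)" by auto
    with 1 assms blk_eq have "u = v" "w = v" by metis+
    thus ?thesis using 1 by simp
  next
    case 2
    with eG have "u' \<in> verts G" "w' \<in> verts G" by auto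
    with 2 assms blk_eq have "u = u'" "w = w'" by metis+
    thus ?thesis using 2 by simp
  qed
next
  assume "(u = w \<and> (x,y) \<in> edges (R u)) \<or> (u,w) \<in> edges G"
  thus "(x,y) \<in> edges H" using assms unfolding edgesH by blast
qed

lemma cnbhH:
  assumes "u \<in> verts G" "w \<in> verts G" "x \<in> verts (R u)" "y \<in> verts (R w)"
  shows "y \<in> cnbh H x \<longleftrightarrow> (u = w \<and> y \<in> cnbh (R u) x) \<or> (u,w) \<in> edges G"
proof (cases "y = x")
  case True
  hence "u = w" using assms blk_eq by metis
  thus ?thesis using True by (simp add: cnbh_def)
next
  case False
  thus ?thesis using edgesH_iff[OF assms] by (auto simp: cnbh_def)
qed

lemma cnbhH_sub: "x \<in> verts H \<Longrightarrow> cnbh H x \<subseteq> verts H"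
proof
  fix y assume x: "x \<in> verts H" and y: "y \<in> cnbh H x"
  show "y \<in> verts H"
  proof (cases "y = x")
    case False
    hence "(x,y) \<in> edges H" using y by (simp add: cnbh_def)
    thus ?thesis unfolding edgesH vertsH using eR eG by blast
  qed (use x in simp)
qed

lemma cnbhG_iff: "v \<in> cnbh G u \<longleftrightarrow> v = u \<or> (u,v) \<in> edges G"
  by (auto simp: cnbh_def)

end


context xj begin

lemma cnbhR_sub: "v \<in> verts G \<Longrightarrow> x \<in> verts (R v) \<Longrightarrow> cnbh (R v) x \<subseteq> verts (R v)"
  using eR by (auto simp: cnbh_def)

lemma lds_ne: "v \<in> verts G \<Longrightarrow> T \<in> legal_dom_seqs (R v) \<Longrightarrow> T \<noteq> []"
  using neR by (auto simp: legal_dom_seqs_def dominating_def)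

lemma fp_in: assumes "S \<in> legal_dom_seqs G" "v \<in> verts G"
  shows "\<exists>i<length S. v \<in> cnbh G (S!i) \<and> (\<forall>j<i. v \<notin> cnbh G (S!j)) \<and> footprinter G S v = S!i"
proof -
  have "\<exists>x\<in>set S. v \<in> cnbh G x" using assms
    by (auto simp: legal_dom_seqs_def dominating_def)
  then obtain x where x: "x \<in> set S" "v \<in> cnbh G x" by blast
  then obtain i0 where "i0 < length S" "S!i0 = x" by (auto simp: in_set_conv_nth)
  hence "\<exists>i<length S. v \<in> cnbh G (S!i)" using x by blast
  from fp_exists[OF this] obtain i where i: "i<length S" "v \<in> cnbh G (S!i)" "\<forall>j<i. v \<notin> cnbh G (S!j)" by blast
  have "footprinter G S v = S!i" using fp_char[OF i] .
  thus ?thesis using i by blast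
qed

lemma lower:
  assumes I: "independent G I" and S: "S \<in> legal_dom_seqs_I G I"
  shows "card I \<le> length S \<and> length S - card I + (\<Sum>v\<in>I. gamma_gr (R v)) \<le> gamma_gr H"
proof -
  have SL: "S \<in> legal_dom_seqs G" and IS: "I_seq G S = I" using S by (auto simp: legal_dom_seqs_I_def)
  have Sleg: "leg G S" and Sdom: "dominating G (set S)" using SL by (auto simp: legal_dom_seqs_eq)
  have Sv: "set S \<subseteq> verts G" using Sdom by (simp add: dominating_def)
  have dS: "distinct S" using leg_distinct[OF Sleg] .
  have finG: "finite (verts G)" using gG by (simp add: graph_def)
  define Tv where "Tv v = (SOME T. T \<in> legal_dom_seqs (R v) \<and> length T = gamma_gr (R v))" for v
  define rep where "rep v = (SOME x. x \<in> verts (R v))" for v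
  have Tv: "Tv v \<in> legal_dom_seqs (R v) \<and> length (Tv v) = gamma_gr (R v)" if "v \<in> verts G" for v
  proof -
    have "finite (verts (R v))" using gR that by (simp add: graph_def)
    from gamma_attained[OF this] show ?thesis unfolding Tv_def by (rule someI2_bex) simp
  qed
  have rep: "rep v \<in> verts (R v)" if "v \<in> verts G" for v
    unfolding rep_def using neR that by (simp add: some_in_eq)
  define f where "f v = (if v \<in> I then Tv v else [rep v])" for v
  have fsub: "set (f v) \<subseteq> verts (R v)" if "v \<in> verts G" for v
    using Tv[OF that] rep[OF that] by (auto simp: f_def legal_dom_seqs_def dominating_def)
  have fne: "f v \<noteq> []" if "v \<in> verts G" for v
    using lds_ne[OF that] Tv[OF that] by (auto simp: f_def)
  have Ii: "v \<in> I \<longleftrightarrow> footprinter G S v = v" if "v \<in> verts G" for v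
    using IS that by (auto simp: I_seq_def)
  have ISsub: "I \<subseteq> set S"
  proof
    fix v assume v: "v \<in> I"
    hence vG: "v \<in> verts G" using I by (auto simp: independent_def)
    from fp_in[OF SL vG] obtain i where "i<length S" "footprinter G S v = S!i" by blast
    thus "v \<in> set S" using Ii[OF vG] v by auto
  qed
  define T where "T = concat (map f S)"
  have legT: "leg H (concat (map f (take k S)))" if "k \<le> length S" for k
    using that
  proof (induction k)
    case 0 thus ?case by (simp add: leg_def)
  next
    case (Suc k)
    hence k: "k < length S" by simp
    define v where "v = S!k"
    have vG: "v \<in> verts G" using k Sv v_def by auto
    define D where "D = dom_by H (concat (map f (take k S)))"
    have Dfact: "w \<in> dom_by G (take k S)" if "w \<in> verts G" "y \<in> verts (R w)" "y \<in> D" for w y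
    proof -
      from that(3) obtain t u where tu: "u \<in> set (take k S)" "t \<in> set (f u)" "y \<in> cnbh H t"
        unfolding D_def dom_by_def by auto
      have uG: "u \<in> verts G" using tu(1) Sv by (meson in_set_takeD subsetD)
      have "t \<in> verts (R u)" using fsub[OF uG] tu(2) by auto
      hence "u = w \<or> (u,w) \<in> edges G" using cnbhH[OF uG that(1) _ that(2)] tu(3) by blast
      hence "w \<in> cnbh G u" by (auto simp: cnbh_def)
      thus ?thesis using tu(1) by (auto simp: dom_by_def)
    qed
    have PNk: "cnbh G v - dom_by G (take k S) \<noteq> {}"
      using Sleg k unfolding leg_def v_def by auto
    have take_eq: "take (Suc k) S = take k S @ [v]" using k v_def by (simp add: take_Suc_conv_app_nth)
    have new: "\<forall>i<length (f v). cnbh H (f v ! i) - D - dom_by H (take i (f v)) \<noteq> {}"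
    proof (cases "v \<in> I")
      case True
      from fp_in[OF SL vG] obtain i where i: "i<length S" "v \<in> cnbh G (S!i)" "\<forall>j<i. v \<notin> cnbh G (S!j)"
        "footprinter G S v = S!i" by blast
      have "S!i = v" using i(4) Ii[OF vG] True by simp
      hence "i = k" using dS i(1) k v_def nth_eq_iff_index_eq by metis
      hence vnd: "v \<notin> dom_by G (take k S)" using i(3) by (auto simp: dom_by_def in_set_conv_nth)
      have fv: "f v = Tv v" using True by (simp add: f_def)
      have legR: "leg (R v) (Tv v)" and TvS: "set (Tv v) \<subseteq> verts (R v)"
        using Tv[OF vG] by (auto simp: legal_dom_seqs_eq dominating_def)
      show ?thesis unfolding fv
      proof (intro allI impI)
        fix i assume i: "i < length (Tv v)"
        then obtain y where y: "y \<in> cnbh (R v) (Tv v ! i)" "y \<notin> dom_by (R v) (take i (Tv v))"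
          using legR unfolding leg_def by blast
        have ti: "Tv v ! i \<in> verts (R v)" using TvS i by auto
        have yv: "y \<in> verts (R v)" using cnbhR_sub[OF vG ti] y(1) by auto
        have "y \<in> cnbh H (Tv v ! i)" using cnbhH[OF vG vG ti yv] y(1) by simp
        moreover have "y \<notin> D" using Dfact[OF vG yv] vnd by blast
        moreover have "y \<notin> dom_by H (take i (Tv v))"
        proof
          assume "y \<in> dom_by H (take i (Tv v))"
          then obtain t where t: "t \<in> set (take i (Tv v))" "y \<in> cnbh H t" by (auto simp: dom_by_def)
          have tv: "t \<in> verts (R v)" using t(1) TvS by (meson in_set_takeD subsetD)
          have "y \<in> cnbh (R v) t" using cnbhH[OF vG vG tv yv] t(2) eG by auto
          thus False using y(2) t(1) by (auto simp: dom_by_def)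
        qed
        ultimately show "cnbh H (Tv v ! i) - D - dom_by H (take i (Tv v)) \<noteq> {}" by blast
      qed
    next
      case False
      hence fv: "f v = [rep v]" by (simp add: f_def)
      from PNk obtain w where w: "w \<in> cnbh G v" "w \<notin> dom_by G (take k S)" by auto
      have "w \<noteq> v"
      proof
        assume "w = v"
        hence "\<forall>j<k. v \<notin> cnbh G (S!j)" using w(2) k nth_in_take[of _ k S] by (auto simp: dom_by_def)
        hence "footprinter G S v = v" using fp_char[OF k] v_def by simp
        thus False using False Ii[OF vG] by simp
      qed
      hence e: "(v,w) \<in> edges G" using w(1) by (simp add: cnbhG_iff)
      hence wG: "w \<in> verts G" using eG by blast
      obtain y where y: "y \<in> verts (R w)" using neR wG by auto
      have "y \<in> cnbh H (rep v)" using cnbhH[OF vG wG rep[OF vG] y] e by simp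
      moreover have "y \<notin> D" using Dfact[OF wG y] w(2) by blast
      ultimately show ?thesis unfolding fv by auto
    qed
    show ?case unfolding take_eq using Suc.IH k new by (simp add: leg_append D_def)
  qed
  have legTT: "leg H T" using legT[of "length S"] by (simp add: T_def)
  have setT: "set T \<subseteq> verts H" using fsub Sv by (auto simp: T_def vertsH)
  have domT: "verts H \<subseteq> dom_by H T"
  proof
    fix y assume "y \<in> verts H"
    then obtain w where wG: "w \<in> verts G" and y: "y \<in> verts (R w)" by (auto simp: vertsH)
    have adj: "y \<in> dom_by H T" if "u \<in> set S" "(u,w) \<in> edges G" for u
    proof -
      have uG: "u \<in> verts G" using that Sv by auto
      obtain t where t: "t \<in> set (f u)" using fne[OF uG] by (cases "f u") auto
      have "t \<in> verts (R u)" using fsub[OF uG] t by auto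
      hence "y \<in> cnbh H t" using cnbhH[OF uG wG _ y] that by simp
      thus ?thesis using t that(1) by (auto simp: T_def dom_by_def)
    qed
    from fp_in[OF SL wG] obtain i where i: "i<length S" "w \<in> cnbh G (S!i)" "footprinter G S w = S!i" by blast
    show "y \<in> dom_by H T"
    proof (cases "S!i = w")
      case False
      thus ?thesis using adj[of "S!i"] i by (auto simp: cnbhG_iff)
    next
      case True
      hence wI: "w \<in> I" using Ii[OF wG] i(3) by simp
      hence "f w = Tv w" by (simp add: f_def)
      moreover have "y \<in> dom_by (R w) (Tv w)" using Tv[OF wG] y
        by (auto simp: legal_dom_seqs_eq dominating_dom_by)
      then obtain t where t: "t \<in> set (Tv w)" "y \<in> cnbh (R w) t" by (auto simp: dom_by_def)
      have "t \<in> verts (R w)" using Tv[OF wG] t(1) by (auto simp: legal_dom_seqs_def dominating_def)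
      hence "y \<in> cnbh H t" using cnbhH[OF wG wG _ y] t(2) by simp
      moreover have "w \<in> set S" using i True by (metis nth_mem)
      ultimately show ?thesis using t unfolding T_def dom_by_def by force
    qed
  qed
  have "length T \<le> gamma_gr H" using gamma_ge[OF finH legTT setT] .
  moreover have "length T = (\<Sum>v\<in>set S. length (f v))"
    unfolding T_def length_concat using dS by (simp add: sum_list_distinct_conv_sum_set comp_def)
  moreover have "(\<Sum>v\<in>set S. length (f v)) = card (set S - I) + (\<Sum>v\<in>I. gamma_gr (R v))"
  proof -
    have "(\<Sum>v\<in>set S. length (f v)) = (\<Sum>v\<in>set S - I. length (f v)) + (\<Sum>v\<in>I. length (f v))"
      by (rule sum.subset_diff[OF ISsub List.finite_set])
    also have "(\<Sum>v\<in>set S - I. length (f v)) = (\<Sum>v\<in>set S - I. 1)" by (rule sum.cong) (auto simp: f_def)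
    also have "(\<Sum>v\<in>I. length (f v)) = (\<Sum>v\<in>I. gamma_gr (R v))"
    proof (rule sum.cong)
      fix v assume v: "v \<in> I"
      hence "v \<in> verts G" using ISsub Sv by blast
      from Tv[OF this] show "length (f v) = gamma_gr (R v)" using v by (simp add: f_def)
    qed simp
    finally show ?thesis by simp
  qed
  moreover have "card I \<le> length S"
    using card_mono[OF List.finite_set ISsub] distinct_card[OF dS] by simp
  moreover have "card (set S - I) = length S - card I"
    using card_Diff_subset[OF finite_subset[OF ISsub List.finite_set] ISsub] distinct_card[OF dS] by simp
  ultimately show ?thesis by simp
qed

end


locale xjT = xj +
  fixes T :: "'b list"
  assumes TL: "T \<in> legal_dom_seqs (xjoin G R)"
begin

definition b :: "nat \<Rightarrow> 'a" where "b j = blk (T!j)"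
definition Bset where "Bset = {v. \<exists>j<length T. b j = v}"
definition ft where "ft v = (LEAST j. j < length T \<and> b j = v)"
definition Iset where "Iset = {v \<in> verts G. \<exists>j<length T. b j = v \<and> (\<forall>j'<j. (b j', v) \<notin> edges G)}"
definition PNT where "PNT j y \<longleftrightarrow> y \<in> cnbh H (T!j) \<and> (\<forall>j'<j. y \<notin> cnbh H (T!j'))"
definition typeA where "typeA v \<longleftrightarrow> (\<exists>w\<in>verts G. \<exists>y\<in>verts (R w). PNT (ft v) y \<and> (\<forall>j<ft v. b j \<noteq> w))"
definition Pset where "Pset = {v \<in> Bset - Iset. \<not> typeA v}"
definition Kset where "Kset = Iset \<union> {v \<in> Bset - Iset. typeA v}"
definition Tb where "Tb v = filter (\<lambda>x. blk x = v) T"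

lemma Tleg: "leg H T" and Tdom: "dominating H (set T)" using TL by (auto simp: legal_dom_seqs_eq)

lemma Tj: "j < length T \<Longrightarrow> T!j \<in> verts H \<and> b j \<in> verts G \<and> T!j \<in> verts (R (b j))"
  using Tdom blk_in unfolding b_def dominating_def by (meson nth_mem subsetD)

lemma PNT_ex: "j < length T \<Longrightarrow> \<exists>y. PNT j y"
proof -
  assume j: "j < length T"
  then obtain y where "y \<in> cnbh H (T!j)" "y \<notin> dom_by H (take j T)" using Tleg unfolding leg_def by blast
  thus ?thesis unfolding PNT_def using nth_in_take[of _ j T] j by (auto simp: dom_by_def)
qed

lemma domT: "z \<in> verts H \<Longrightarrow> \<exists>j<length T. z \<in> cnbh H (T!j)"
  using Tdom unfolding dominating_def by (metis in_set_conv_nth)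

lemma TH: assumes "j < length T" "w \<in> verts G" "y \<in> verts (R w)"
  shows "y \<in> cnbh H (T!j) \<longleftrightarrow> (b j = w \<and> y \<in> cnbh (R w) (T!j)) \<or> (b j, w) \<in> edges G"
  using cnbhH[of "b j" w "T!j" y] Tj[OF assms(1)] assms by auto

lemma PNT_v: "j < length T \<Longrightarrow> PNT j y \<Longrightarrow> y \<in> verts H"
  using cnbhH_sub Tj unfolding PNT_def by blast

lemma ft: "v \<in> Bset \<Longrightarrow> ft v < length T \<and> b (ft v) = v \<and> (\<forall>j<ft v. b j \<noteq> v)"
proof -
  assume "v \<in> Bset"
  then have ex: "\<exists>j. j < length T \<and> b j = v" by (auto simp: Bset_def)
  have "ft v < length T \<and> b (ft v) = v" unfolding ft_def by (rule LeastI_ex[OF ex])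
  moreover have "\<forall>j<ft v. b j \<noteq> v"
  proof (intro allI impI notI)
    fix j assume j: "j < ft v" "b j = v"
    hence "j < length T" using calculation by simp
    thus False using not_less_Least[OF j(1)[unfolded ft_def]] j(2) by simp
  qed
  ultimately show ?thesis by blast
qed

lemma ft_le: "j < length T \<Longrightarrow> ft (b j) \<le> j"
  unfolding ft_def by (rule Least_le) simp

lemma Bset_G: "Bset \<subseteq> verts G" using Tj by (auto simp: Bset_def)
lemma Iset_B: "Iset \<subseteq> Bset" by (auto simp: Iset_def Bset_def)
lemma Kset_B: "Kset \<subseteq> Bset" using Iset_B by (auto simp: Kset_def)
lemma finG: "finite (verts G)" using gG by (simp add: graph_def)

lemma indep: "independent G Iset"
  unfolding independent_def
proof (intro conjI ballI)
  show "Iset \<subseteq> verts G" by (auto simp: Iset_def)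
next
  fix u v assume u: "u \<in> Iset" and v: "v \<in> Iset"
  show "(u,v) \<notin> edges G"
  proof
    assume e: "(u,v) \<in> edges G"
    obtain ju where ju: "ju < length T" "b ju = u" "\<forall>j'<ju. (b j', u) \<notin> edges G" using u by (auto simp: Iset_def)
    obtain jv where jv: "jv < length T" "b jv = v" "\<forall>j'<jv. (b j', v) \<notin> edges G" using v by (auto simp: Iset_def)
    have "(v,u) \<in> edges G" using eG e by blast
    thus False using e ju jv by (metis linorder_neqE_nat eG)
  qed
qed

lemma Tb_leg: assumes vG: "v \<in> verts G" shows "leg (R v) (Tb v)"
  unfolding Tb_def
proof (rule leg_filter, intro allI impI)
  fix j assume j: "j < length T" and bj: "blk (T!j) = v"
  hence bj': "b j = v" by (simp add: b_def)
  hence vB: "v \<in> Bset" using j by (auto simp: Bset_def)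
  show "\<exists>y\<in>cnbh (R v) (T ! j). \<forall>j'<j. blk (T ! j') = v \<longrightarrow> y \<notin> cnbh (R v) (T ! j')"
  proof (cases "j = ft v")
    case True
    thus ?thesis using ft[OF vB] by (intro bexI[of _ "T ! j"]) (auto simp: b_def)
  next
    case False
    hence lt: "ft v < j" using ft_le[OF j] bj' by simp
    obtain y where y: "PNT j y" using PNT_ex[OF j] by blast
    define w where "w = blk y"
    have wG: "w \<in> verts G" and yw: "y \<in> verts (R w)" using blk_in PNT_v[OF j y] w_def by auto
    have "w = v"
    proof (rule ccontr)
      assume "w \<noteq> v"
      hence "(v,w) \<in> edges G" using y TH[OF j wG yw] bj' by (auto simp: PNT_def)
      hence "y \<in> cnbh H (T!(ft v))" using TH[OF _ wG yw, of "ft v"] ft[OF vB] by auto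
      thus False using y lt by (auto simp: PNT_def)
    qed
    hence "y \<in> cnbh (R v) (T!j)" using y TH[OF j wG yw] bj' eG by (auto simp: PNT_def)
    moreover have "\<forall>j'<j. blk (T ! j') = v \<longrightarrow> y \<notin> cnbh (R v) (T ! j')"
      using y TH[OF _ wG yw] \<open>w = v\<close> j by (auto simp: PNT_def b_def)
    ultimately show ?thesis by blast
  qed
qed

lemma Tb_set: "set (Tb v) \<subseteq> verts (R v)"
  using Tdom blk_in by (auto simp: Tb_def dominating_def)

lemma Tb_gamma: "v \<in> verts G \<Longrightarrow> length (Tb v) \<le> gamma_gr (R v)"
  using gamma_ge[OF _ Tb_leg Tb_set] gR by (auto simp: graph_def)

lemma Tb_len: "length (Tb v) = card {j. j < length T \<and> b j = v}"
  unfolding Tb_def b_def by (rule length_filter_conv_card)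

lemma Tb_nonI: assumes vG: "v \<in> verts G" and vI: "v \<notin> Iset" shows "length (Tb v) \<le> 1"
proof -
  have *: False if j12: "j1 < j2" "j2 < length T" "b j1 = v" "b j2 = v" for j1 j2
  proof -
    obtain j' where j': "j' < j1" "(b j', v) \<in> edges G" using vI vG j12 by (auto simp: Iset_def)
    obtain y where y: "PNT j2 y" using PNT_ex[OF j12(2)] by blast
    define w where "w = blk y"
    have wG: "w \<in> verts G" and yw: "y \<in> verts (R w)" using blk_in PNT_v[OF j12(2) y] w_def by auto
    show False
    proof (cases "w = v")
      case True
      hence "y \<in> cnbh H (T!j')" using TH[OF _ wG yw, of j'] j' j12 by auto
      thus False using y j' j12 by (auto simp: PNT_def)
    next
      case False
      hence "(v,w) \<in> edges G" using y TH[OF j12(2) wG yw] j12 by (auto simp: PNT_def)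
      hence "y \<in> cnbh H (T!j1)" using TH[OF _ wG yw, of j1] j12 by auto
      thus False using y j12 by (auto simp: PNT_def)
    qed
  qed
  have "card {j. j < length T \<and> b j = v} \<le> Suc 0"
    by (subst card_le_Suc0_iff_eq) (auto, metis * linorder_neqE_nat)
  thus ?thesis by (simp add: Tb_len)
qed

lemma Tb_nonB: "v \<notin> Bset \<Longrightarrow> length (Tb v) = 0"
  by (auto simp: Tb_len Bset_def)

lemma len_sum: "length T = (\<Sum>v\<in>verts G. length (Tb v))"
proof -
  have "\<forall>x\<in>set T. blk x \<in> verts G" using Tdom blk_in by (auto simp: dominating_def)
  hence "length T = (\<Sum>v\<in>verts G. length (filter (\<lambda>x. blk x = v) T))"
  proof (induction T)
    case (Cons x xs)
    have "(\<Sum>v\<in>verts G. length (filter (\<lambda>y. blk y = v) (x#xs))) =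
      (\<Sum>v\<in>verts G. (if blk x = v then 1 else 0) + length (filter (\<lambda>y. blk y = v) xs))"
      by (rule sum.cong) auto
    also have "\<dots> = 1 + length xs" using Cons finG by (simp add: sum.distrib)
    finally show ?case by simp
  qed simp
  thus ?thesis by (simp add: Tb_def)
qed

end


context xjT begin

lemma gP: assumes uP: "u \<in> Pset"
  shows "\<exists>w\<in>Iset. (u,w) \<in> edges G \<and> (\<forall>j<ft u. (b j, w) \<notin> edges G) \<and> Suc (length (Tb w)) \<le> gamma_gr (R w)"
proof -
  have uB: "u \<in> Bset" and uI: "u \<notin> Iset" and nA: "\<not> typeA u" using uP by (auto simp: Pset_def)
  have uG: "u \<in> verts G" using uB Bset_G by auto
  note fu = ft[OF uB]
  obtain y where y: "PNT (ft u) y" using PNT_ex fu by blast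
  define w where "w = blk y"
  have wG: "w \<in> verts G" and yw: "y \<in> verts (R w)" using blk_in PNT_v y fu w_def by auto
  obtain j0 where j0: "j0 < ft u" "(b j0, u) \<in> edges G" using uI uG fu by (auto simp: Iset_def)
  have "w \<noteq> u"
  proof
    assume "w = u"
    hence "y \<in> cnbh H (T!j0)" using TH[OF _ wG yw, of j0] j0 fu by auto
    thus False using y j0 by (auto simp: PNT_def)
  qed
  hence uw: "(u,w) \<in> edges G" using y TH[OF _ wG yw, of "ft u"] fu by (auto simp: PNT_def)
  obtain j1 where j1: "j1 < ft u" "b j1 = w" using nA wG yw y by (auto simp: typeA_def)
  have noadj: "\<forall>j<ft u. (b j, w) \<notin> edges G"
  proof (intro allI impI notI)
    fix j assume "j < ft u" "(b j, w) \<in> edges G"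
    hence "y \<in> cnbh H (T!j)" using TH[OF _ wG yw, of j] fu by auto
    thus False using y \<open>j < ft u\<close> by (auto simp: PNT_def)
  qed
  have "j1 < length T" using j1 fu by linarith
  hence wB: "w \<in> Bset" using j1 unfolding Bset_def by blast
  note fw = ft[OF wB]
  have fwu: "ft w < ft u" using ft_le[of j1] j1 fu by fastforce
  have wI: "w \<in> Iset" unfolding Iset_def using wG fw fwu noadj by auto
  have before: "j < ft u" if jl: "j < length T" "b j = w" for j
  proof (rule ccontr)
    assume "\<not> j < ft u"
    moreover have "j \<noteq> ft u" using jl fu \<open>w \<noteq> u\<close> by auto
    ultimately have lt: "ft u < j" by simp
    obtain y' where y': "PNT j y'" using PNT_ex jl by blast
    define w' where "w' = blk y'"
    have wG': "w' \<in> verts G" and yw': "y' \<in> verts (R w')" using blk_in PNT_v y' jl w'_def by auto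
    show False
    proof (cases "w' = w")
      case True
      hence "y' \<in> cnbh H (T!(ft u))" using TH[OF _ wG' yw', of "ft u"] fu uw by auto
      thus False using y' lt by (auto simp: PNT_def)
    next
      case False
      hence "(w,w') \<in> edges G" using y' TH[OF jl(1) wG' yw'] jl by (auto simp: PNT_def)
      hence "y' \<in> cnbh H (T!(ft w))" using TH[OF _ wG' yw', of "ft w"] fw by auto
      thus False using y' lt fwu by (auto simp: PNT_def)
    qed
  qed
  have "y \<notin> dom_by (R w) (Tb w)"
  proof
    assume "y \<in> dom_by (R w) (Tb w)"
    then obtain x where x: "x \<in> set T" "blk x = w" "y \<in> cnbh (R w) x" by (auto simp: dom_by_def Tb_def)
    then obtain j where j: "j < length T" "T!j = x" by (auto simp: in_set_conv_nth)
    hence bj: "b j = w" using x by (simp add: b_def)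
    have "y \<in> cnbh H (T!j)" using TH[OF j(1) wG yw] bj x j by auto
    thus False using y before[OF j(1) bj] by (auto simp: PNT_def)
  qed
  hence "leg (R w) (Tb w @ [y])" using Tb_leg[OF wG] self_cnbh[of y "R w"] unfolding leg_snoc by blast
  moreover have "set (Tb w @ [y]) \<subseteq> verts (R w)" using Tb_set yw by auto
  moreover have finw: "finite (verts (R w))" using gR wG by (simp add: graph_def)
  ultimately have "length (Tb w @ [y]) \<le> gamma_gr (R w)"
    using gamma_ge by blast
  thus ?thesis using wI uw noadj by auto
qed

lemma Dm: assumes vG: "v \<in> verts G"
  shows "\<exists>u\<in>Kset. v \<in> cnbh G u \<and> (\<forall>u'\<in>Kset. ft u' < ft u \<longrightarrow> v \<notin> cnbh G u') \<and> (u = v \<longleftrightarrow> v \<in> Iset)"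
proof -
  define Q where "Q j \<longleftrightarrow> j < length T \<and> (b j = v \<or> (b j, v) \<in> edges G)" for j
  obtain z where z: "z \<in> verts (R v)" using neR vG by auto
  hence "z \<in> verts H" using vG by (auto simp: vertsH)
  then obtain j where j: "j < length T" "z \<in> cnbh H (T!j)" using domT by blast
  have "Q j" using TH[OF j(1) vG z] j by (auto simp: Q_def)
  define j0 where "j0 = (LEAST j. Q j)"
  have Qj0: "Q j0" unfolding j0_def by (rule LeastI) fact
  have minj0: "\<not> Q j" if "j < j0" for j using not_less_Least that unfolding j0_def by blast
  define u where "u = b j0"
  have uB: "u \<in> Bset" using Qj0 by (auto simp: Q_def Bset_def u_def)
  note fu = ft[OF uB]
  have ftu: "ft u = j0"
  proof -
    have "ft u \<le> j0" using ft_le Qj0 by (auto simp: Q_def u_def)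
    moreover have "Q (ft u)" using fu u_def Qj0 by (auto simp: Q_def)
    ultimately show ?thesis
    proof (cases "ft u = j0")
      case False
      hence "ft u < j0" using \<open>ft u \<le> j0\<close> by simp
      thus ?thesis using minj0 \<open>Q (ft u)\<close> by blast
    qed
  qed
  have uv: "v \<in> cnbh G u" using Qj0 by (auto simp: Q_def u_def cnbhG_iff)
  have iff: "u = v \<longleftrightarrow> v \<in> Iset"
  proof
    assume "u = v"
    thus "v \<in> Iset" unfolding Iset_def using vG Qj0 minj0 by (auto simp: Q_def u_def)
  next
    assume vI: "v \<in> Iset"
    then obtain jv where jv: "jv < length T" "b jv = v" "\<forall>j'<jv. (b j', v) \<notin> edges G" by (auto simp: Iset_def)
    have "j0 \<le> jv"
    proof (rule ccontr)
      assume "\<not> j0 \<le> jv"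
      hence "\<not> Q jv" using minj0 by simp
      thus False using jv by (simp add: Q_def)
    qed
    show "u = v"
    proof (rule ccontr)
      assume "u \<noteq> v"
      hence "j0 \<noteq> jv" using jv u_def by auto
      hence "j0 < jv" using \<open>j0 \<le> jv\<close> by simp
      thus False using jv(3) Qj0 \<open>u \<noteq> v\<close> by (auto simp: Q_def u_def)
    qed
  qed
  have uK: "u \<in> Kset"
  proof (cases "u \<in> Iset")
    case True thus ?thesis by (simp add: Kset_def)
  next
    case False
    hence "u \<noteq> v" using iff by (metis iff)
    have "typeA u" unfolding typeA_def
    proof (intro bexI conjI)
      show "PNT (ft u) z" unfolding PNT_def
      proof
        show "z \<in> cnbh H (T ! ft u)" using TH[OF _ vG z, of "ft u"] fu ftu Qj0 \<open>u \<noteq> v\<close>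
          by (auto simp: Q_def u_def)
        show "\<forall>j'<ft u. z \<notin> cnbh H (T ! j')"
          using TH[OF _ vG z] minj0 ftu fu by (auto simp: Q_def)
      qed
      show "\<forall>j<ft u. b j \<noteq> v" using minj0 ftu fu by (auto simp: Q_def)
    qed (use vG z in auto)
    thus ?thesis using uB False by (simp add: Kset_def)
  qed
  have "\<forall>u'\<in>Kset. ft u' < ft u \<longrightarrow> v \<notin> cnbh G u'"
  proof (intro ballI impI)
    fix u' assume u': "u' \<in> Kset" "ft u' < ft u"
    have "u' \<in> Bset" using u' Kset_B by auto
    note fu' = ft[OF this]
    have "\<not> Q (ft u')" using minj0 u' ftu by simp
    thus "v \<notin> cnbh G u'" using fu' by (auto simp: Q_def cnbhG_iff)
  qed
  thus ?thesis using uK uv iff by blast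
qed

lemma KL: assumes vK: "v \<in> Kset"
  shows "\<exists>x\<in>cnbh G v. \<forall>u\<in>Kset. ft u < ft v \<longrightarrow> x \<notin> cnbh G u"
proof (cases "v \<in> Iset")
  case True
  then obtain j where j: "j < length T" "b j = v" "\<forall>j'<j. (b j', v) \<notin> edges G" by (auto simp: Iset_def)
  have fvj: "ft v \<le> j" using ft_le j by fastforce
  show ?thesis
  proof (intro bexI ballI impI)
    fix u assume u: "u \<in> Kset" "ft u < ft v"
    hence uB: "u \<in> Bset" using Kset_B by auto
    show "v \<notin> cnbh G u"
    proof
      assume "v \<in> cnbh G u"
      moreover have "u \<noteq> v" using u by auto
      ultimately have "(u,v) \<in> edges G" by (simp add: cnbhG_iff)
      moreover have "ft u < j" using u fvj by simp
      ultimately show False using j(3) ft[OF uB] by auto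
    qed
  qed simp
next
  case False
  hence "typeA v" using vK by (auto simp: Kset_def)
  then obtain w y where wG: "w \<in> verts G" and yw: "y \<in> verts (R w)" and y: "PNT (ft v) y"
    and nb: "\<forall>j<ft v. b j \<noteq> w" by (auto simp: typeA_def)
  have vB: "v \<in> Bset" using vK Kset_B by auto
  note fv = ft[OF vB]
  show ?thesis
  proof (intro bexI ballI impI)
    show "w \<in> cnbh G v" using y TH[OF _ wG yw, of "ft v"] fv by (auto simp: PNT_def cnbhG_iff)
  next
    fix u assume u: "u \<in> Kset" "ft u < ft v"
    hence uB: "u \<in> Bset" using Kset_B by auto
    note fu = ft[OF uB]
    show "w \<notin> cnbh G u"
    proof
      assume "w \<in> cnbh G u"
      then consider "w = u" | "(u,w) \<in> edges G" by (auto simp: cnbhG_iff)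
      thus False
      proof cases
        case 1 thus False using nb u fu by auto
      next
        case 2
        hence "y \<in> cnbh H (T!(ft u))" using TH[OF _ wG yw, of "ft u"] fu by auto
        thus False using y u by (auto simp: PNT_def)
      qed
    qed
  qed
qed

end


context xjT begin

definition L where "L = sorted_list_of_set (ft ` Kset)"
definition S where "S = map b L"

lemma KG: "Kset \<subseteq> verts G" using Kset_B Bset_G by (rule subset_trans)
lemma finK: "finite Kset" using finite_subset[OF KG finG] .

lemma L_props: "set L = ft ` Kset" "sorted_wrt (<) L" "distinct L"
  using finK by (auto simp: L_def)

lemma bft: "v \<in> Kset \<Longrightarrow> b (ft v) = v"
proof -
  assume "v \<in> Kset"
  hence "v \<in> Bset" using Kset_B by (rule subsetD[rotated])
  thus ?thesis using ft by simp
qed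

lemma setS: "set S = Kset" unfolding S_def using L_props(1) bft by (auto simp: image_iff)

lemma S_nth: "k < length S \<Longrightarrow> S!k \<in> Kset \<and> L!k = ft (S!k)"
proof -
  assume k: "k < length S"
  hence kL: "k < length L" by (simp add: S_def)
  then obtain v where v: "v \<in> Kset" "L!k = ft v" using L_props(1) nth_mem by (metis imageE)
  have "S!k = v" using kL v bft by (simp add: S_def)
  thus ?thesis using v by simp
qed

lemma take_S: assumes k: "k < length S"
  shows "set (take k S) = {u \<in> Kset. ft u < ft (S!k)}"
proof
  show "set (take k S) \<subseteq> {u \<in> Kset. ft u < ft (S!k)}"
  proof
    fix x assume "x \<in> set (take k S)"
    then obtain j where j: "j < k" "S!j = x" by (auto simp: in_set_take_iff)
    have "L!j < L!k" using L_props(2) j k by (simp add: S_def sorted_wrt_iff_nth_less)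
    thus "x \<in> {u \<in> Kset. ft u < ft (S!k)}" using S_nth[of j] S_nth[OF k] j k by auto
  qed
next
  show "{u \<in> Kset. ft u < ft (S!k)} \<subseteq> set (take k S)"
  proof
    fix u assume u: "u \<in> {u \<in> Kset. ft u < ft (S!k)}"
    then obtain j where j: "j < length L" "L!j = ft u" using L_props(1) by (metis imageI in_set_conv_nth mem_Collect_eq)
    have "j < k"
    proof (rule ccontr)
      assume "\<not> j < k"
      moreover have "j \<noteq> k" using u j S_nth[OF k] by auto
      ultimately have "k < j" by simp
      hence "L!k < L!j" using L_props(2) j unfolding sorted_wrt_iff_nth_less by blast
      thus False using u j S_nth[OF k] by auto
    qed
    moreover have "S!j = u" using j u bft by (simp add: S_def)
    ultimately show "u \<in> set (take k S)" using j by (auto simp: in_set_take_iff S_def)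
  qed
qed

lemma S_leg: "leg G S"
  unfolding leg_def
proof (intro allI impI)
  fix k assume k: "k < length S"
  from KL[of "S!k"] S_nth[OF k] obtain x where x: "x \<in> cnbh G (S!k)" "\<forall>u\<in>Kset. ft u < ft (S!k) \<longrightarrow> x \<notin> cnbh G u"
    by blast
  hence "x \<notin> dom_by G (take k S)" using take_S[OF k] by (auto simp: dom_by_def)
  thus "cnbh G (S ! k) - dom_by G (take k S) \<noteq> {}" using x by blast
qed

lemma S_dom: "dominating G (set S)"
  unfolding dominating_def setS
proof (intro conjI ballI)
  show "Kset \<subseteq> verts G" by (rule KG)
  fix x assume "x \<in> verts G"
  from Dm[OF this] show "\<exists>v\<in>Kset. x \<in> cnbh G v" by auto
qed

lemma S_I: "I_seq G S = Iset"
proof -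
  have "footprinter G S v = v \<longleftrightarrow> v \<in> Iset" if vG: "v \<in> verts G" for v
  proof -
    obtain u where u: "u \<in> Kset" "v \<in> cnbh G u" "\<forall>u'\<in>Kset. ft u' < ft u \<longrightarrow> v \<notin> cnbh G u'"
      "u = v \<longleftrightarrow> v \<in> Iset" using Dm[OF vG] by blast
    obtain i where i: "i < length S" "S!i = u" using u(1) setS by (metis in_set_conv_nth)
    have "\<forall>j<i. v \<notin> cnbh G (S!j)"
    proof (intro allI impI)
      fix j assume "j < i"
      hence "S!j \<in> set (take i S)" using i by (simp add: nth_in_take)
      thus "v \<notin> cnbh G (S!j)" using take_S[OF i(1)] u(3) i by auto
    qed
    hence "footprinter G S v = u" using fp_char[OF i(1)] u(2) i by simp
    thus ?thesis using u(4) by auto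
  qed
  moreover have "Iset \<subseteq> verts G" using Iset_B Bset_G by (rule subset_trans)
  ultimately show ?thesis unfolding I_seq_def by auto
qed

lemma S_count: "length T + card Iset \<le> length S + (\<Sum>v\<in>Iset. gamma_gr (R v))"
proof -
  have dS: "distinct S" using leg_distinct[OF S_leg] .
  have lenS: "length S = card Kset" using setS dS distinct_card by metis
  have IG: "Iset \<subseteq> verts G" using Iset_B Bset_G by auto
  have finI: "finite Iset" using IG finG finite_subset by blast
  have "length T = (\<Sum>v\<in>Iset. length (Tb v)) + (\<Sum>v\<in>verts G - Iset. length (Tb v))"
    unfolding len_sum sum.subset_diff[OF IG finG] by simp
  also have "(\<Sum>v\<in>verts G - Iset. length (Tb v)) \<le> (\<Sum>v\<in>verts G - Iset. if v \<in> Bset then 1 else 0)"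
    using Tb_nonI Tb_nonB by (intro sum_mono) auto
  also have "(\<Sum>v\<in>verts G - Iset. if v \<in> Bset then 1 else 0) = card ((verts G - Iset) \<inter> Bset)"
    using finG by (simp add: sum.inter_restrict[symmetric])
  also have "(verts G - Iset) \<inter> Bset = (Kset - Iset) \<union> Pset" using Bset_G by (auto simp: Kset_def Pset_def)
  also have "card ((Kset - Iset) \<union> Pset) = card (Kset - Iset) + card Pset"
  proof (rule card_Un_disjoint)
    show "finite (Kset - Iset)" using finK by simp
    have "Pset \<subseteq> verts G" using Bset_G by (auto simp: Pset_def)
    thus "finite Pset" using finG by (rule finite_subset)
    show "(Kset - Iset) \<inter> Pset = {}" by (auto simp: Kset_def Pset_def)
  qed
  finally have A: "length T \<le> (\<Sum>v\<in>Iset. length (Tb v)) + card Pset + card (Kset - Iset)" by simp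
  define g where "g u = (SOME w. w \<in> Iset \<and> (u,w) \<in> edges G \<and> (\<forall>j<ft u. (b j, w) \<notin> edges G) \<and> Suc (length (Tb w)) \<le> gamma_gr (R w))" for u
  have g: "g u \<in> Iset \<and> (u, g u) \<in> edges G \<and> (\<forall>j<ft u. (b j, g u) \<notin> edges G) \<and> Suc (length (Tb (g u))) \<le> gamma_gr (R (g u))"
    if "u \<in> Pset" for u
    using gP[OF that] unfolding g_def by (rule someI2_bex) blast
  have inj: "inj_on g Pset"
  proof (rule inj_onI)
    fix u u' assume u: "u \<in> Pset" "u' \<in> Pset" "g u = g u'"
    have uB: "u \<in> Bset" "u' \<in> Bset" using u by (auto simp: Pset_def)
    have "ft u = ft u'"
    proof (rule ccontr)
      assume "ft u \<noteq> ft u'"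
      then consider "ft u < ft u'" | "ft u' < ft u" by linarith
      thus False
      proof cases
        case 1
        have "(b (ft u), g u') \<notin> edges G" using g[OF u(2)] 1 by blast
        thus False using g[OF u(1)] u(3) ft[OF uB(1)] by simp
      next
        case 2
        have "(b (ft u'), g u) \<notin> edges G" using g[OF u(1)] 2 by blast
        thus False using g[OF u(2)] u(3) ft[OF uB(2)] by simp
      qed
    qed
    have "u = b (ft u)" using ft[OF uB(1)] by simp
    also have "\<dots> = b (ft u')" using \<open>ft u = ft u'\<close> by (rule arg_cong)
    also have "\<dots> = u'" using ft[OF uB(2)] by simp
    finally show "u = u'" .
  qed
  have gsub: "g ` Pset \<subseteq> Iset"
  proof
    fix w assume "w \<in> g ` Pset"
    then obtain u where "u \<in> Pset" "w = g u" by blast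
    thus "w \<in> Iset" using g[of u] by simp
  qed
  have "(\<Sum>v\<in>Iset. length (Tb v)) + card Pset = (\<Sum>v\<in>Iset. length (Tb v)) + card (g ` Pset)"
    using card_image[OF inj] by simp
  also have "card (g ` Pset) = (\<Sum>v\<in>Iset. if v \<in> g ` Pset then 1 else 0)"
    using finI gsub by (simp add: sum.inter_restrict[symmetric] Int_absorb1)
  also have "(\<Sum>v\<in>Iset. length (Tb v)) + \<dots> = (\<Sum>v\<in>Iset. length (Tb v) + (if v \<in> g ` Pset then 1 else 0))"
    by (simp add: sum.distrib)
  also have "\<dots> \<le> (\<Sum>v\<in>Iset. gamma_gr (R v))"
  proof (rule sum_mono)
    fix v assume v: "v \<in> Iset"
    show "length (Tb v) + (if v \<in> g ` Pset then 1 else 0) \<le> gamma_gr (R v)"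
    proof (cases "v \<in> g ` Pset")
      case True
      then obtain u where "u \<in> Pset" "v = g u" by blast
      thus ?thesis using g[of u] by simp
    next
      case False
      thus ?thesis using Tb_gamma[of v] v IG by auto
    qed
  qed
  finally have B: "(\<Sum>v\<in>Iset. length (Tb v)) + card Pset \<le> (\<Sum>v\<in>Iset. gamma_gr (R v))" .
  have IK: "Iset \<subseteq> Kset" by (simp add: Kset_def)
  have "card Kset = card Iset + card (Kset - Iset)"
    using card_Diff_subset[OF finite_subset[OF IK finK] IK] card_mono[OF finK IK] by simp
  thus ?thesis using A B lenS by linarith
qed

lemma upper: "\<exists>I S. independent G I \<and> S \<in> legal_dom_seqs_I G I \<and>
   length T + card I \<le> length S + (\<Sum>v\<in>I. gamma_gr (R v))"
  using indep S_leg S_dom S_I S_count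
  by (intro exI[of _ Iset] exI[of _ S]) (auto simp: legal_dom_seqs_I_def legal_dom_seqs_eq)

end


lemma gI_ge: assumes "finite (verts G)" "S \<in> legal_dom_seqs_I G I"
  shows "legal_dom_seqs_I G I \<noteq> {} \<and> length S \<le> Max (length ` legal_dom_seqs_I G I)
         \<and> gamma_gr_I G I = ereal (real (Max (length ` legal_dom_seqs_I G I)))"
proof -
  have fin: "finite (legal_dom_seqs_I G I)"
    using finite_lds[OF assms(1)] by (rule finite_subset[rotated]) (auto simp: legal_dom_seqs_I_def)
  show ?thesis using assms(2) fin by (auto simp: gamma_gr_I_def intro!: Max_ge)
qed

lemma gI_attained: assumes "finite (verts G)" "legal_dom_seqs_I G I \<noteq> {}"
  shows "\<exists>S\<in>legal_dom_seqs_I G I. gamma_gr_I G I = ereal (real (length S))"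
proof -
  have fin: "finite (legal_dom_seqs_I G I)"
    using finite_lds[OF assms(1)] by (rule finite_subset[rotated]) (auto simp: legal_dom_seqs_I_def)
  have "Max (length ` legal_dom_seqs_I G I) \<in> length ` legal_dom_seqs_I G I"
    using fin assms(2) by (intro Max_in) auto
  thus ?thesis using assms(2) by (auto simp: gamma_gr_I_def)
qed

theorem theorem1:
  fixes G :: "'a graph" and R :: "'a \<Rightarrow> 'b graph"
  assumes "graph G"
    and "\<forall>v\<in>verts G. graph (R v)"
    and "\<forall>v\<in>verts G. verts (R v) \<noteq> {}"
    and "\<forall>u\<in>verts G. \<forall>v\<in>verts G. u \<noteq> v \<longrightarrow> verts (R u) \<inter> verts (R v) = {}"
  shows "ereal (real (gamma_gr (xjoin G R))) =
    Max {gamma_gr_I G I + ereal (\<Sum>v\<in>I. real (gamma_gr (R v))) - ereal (real (card I))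
         | I. independent G I}"
proof -
  interpret xj G R using assms by unfold_locales
  have finG: "finite (verts G)" using assms(1) by (simp add: graph_def)
  define F where "F I = gamma_gr_I G I + ereal (\<Sum>v\<in>I. real (gamma_gr (R v))) - ereal (real (card I))" for I
  define X where "X = {gamma_gr_I G I + ereal (\<Sum>v\<in>I. real (gamma_gr (R v))) - ereal (real (card I))
         | I. independent G I}"
  have X: "X = F ` {I. independent G I}" unfolding X_def F_def by auto
  have finX: "finite X" unfolding X
    by (rule finite_imageI, rule finite_subset[of _ "Pow (verts G)"]) (auto simp: independent_def finG)
  have neX: "X \<noteq> {}" unfolding X by (auto simp: independent_def)
  have le: "x \<le> ereal (real (gamma_gr H))" if xX: "x \<in> X" for x
  proof -
    obtain I where I: "independent G I" "x = F I" using xX X by auto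
    show ?thesis
    proof (cases "legal_dom_seqs_I G I = {}")
      case True
      thus ?thesis using I by (simp add: F_def gamma_gr_I_def)
    next
      case False
      then obtain S where S: "S \<in> legal_dom_seqs_I G I" "gamma_gr_I G I = ereal (real (length S))"
        using gI_attained[OF finG] by blast
      have lw: "card I \<le> length S" "length S - card I + (\<Sum>v\<in>I. gamma_gr (R v)) \<le> gamma_gr H"
        using lower[OF I(1) S(1)] by auto
      have "real (length S) + (\<Sum>v\<in>I. real (gamma_gr (R v))) - real (card I) \<le> real (gamma_gr H)"
      proof -
        have "real (length S - card I + (\<Sum>v\<in>I. gamma_gr (R v))) \<le> real (gamma_gr H)"
          using lw(2) by (simp only: of_nat_le_iff)
        thus ?thesis using lw(1) by (simp add: of_nat_diff)
      qed
      thus ?thesis using I S by (simp add: F_def)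
    qed
  qed
  have ge: "\<exists>x\<in>X. ereal (real (gamma_gr H)) \<le> x"
  proof -
    obtain T where T: "T \<in> legal_dom_seqs H" "length T = gamma_gr H" using gamma_attained[OF finH] by blast
    interpret xjT G R T using T(1) by unfold_locales
    obtain I S where IS: "independent G I" "S \<in> legal_dom_seqs_I G I"
      "length T + card I \<le> length S + (\<Sum>v\<in>I. gamma_gr (R v))" using upper by blast
    have g: "length S \<le> Max (length ` legal_dom_seqs_I G I)"
      "gamma_gr_I G I = ereal (real (Max (length ` legal_dom_seqs_I G I)))" using gI_ge[OF finG IS(2)] by auto
    have "real (length T) + real (card I) \<le> real (length S) + (\<Sum>v\<in>I. real (gamma_gr (R v)))"
      using IS(3) by (metis of_nat_add of_nat_le_iff of_nat_sum)
    hence "ereal (real (gamma_gr H)) \<le> F I"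
      using g T(2) by (simp add: F_def)
    thus ?thesis using IS(1) X by blast
  qed
  have "Max X \<le> ereal (real (gamma_gr H))" using finX neX le by (simp add: Max_le_iff)
  moreover have "ereal (real (gamma_gr H)) \<le> Max X" using ge finX by (meson Max_ge order_trans)
  ultimately show ?thesis unfolding X_def by simp
qed


end
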